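(* Let $\hbar^2\ll\varepsilon_\hbar\ll\hbar$. Let $\Lambda_0\in\mathcal{L}_1$ and let $k=k(\hbar)=n(\hbar)\vec v_{\Lambda_0}+m(\hbar)\vec v_{\Lambda_0}^\perp\in\mathbb{Z}^2$ (with $n(\hbar),m(\hbar)$ integers), along a sequence with $\|k\|\to\infty$, $\hbar=\|k\|^{-1}$ and $|m(\hbar)|\ll1/\hbar$; set $\psi_\hbar=e_k$. For $\Lambda\in\mathcal{L}_1$ let $\mathbf{F}^0_\Lambda$ denote the limit (as $\hbar\to0$) of the distributions $a\mapsto\langle\psi_\hbar,\operatorname{Op}_\hbar(\mathcal{I}_\Lambda(a)(x,\hbar H_\Lambda(\xi)/\varepsilon_\hbar))\psi_\hbar\rangle$ on $\mathcal{C}^\infty_c(\mathbb{T}^2\times\mathbb{R})$. Then: (1) if $2\pi m(\hbar)\hbar^2\varepsilon_\hbar^{-1}\to\omega\in\mathbb{R}$, then $\mathbf{F}^0_\Lambda=dx\otimes\delta_{\omega L_{\Lambda_0}}(\eta)$ if $\Lambda=\mathbb{Z}\vec v_{\Lambda_0}^\perp$, and $\mathbf{F}^0_\Lambda=0$ otherwise; (2) if $2\pi|m(\hbar)|\hbar^2\varepsilon_\hbar^{-1}\to+\infty$, then $\mathbf{F}^0_\Lambda=0$ for all $\Lambda\in\mathcal{L}_1$.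
   Context: $\mathbb{T}^2=\mathbb{R}^2/\mathbb{Z}^2$, $e_k(x)=e^{2i\pi k\cdot x}$, $\langle u,v\rangle=\int\overline{u}v$. Standard quantization: $\operatorname{Op}_\hbar(a)e_k=a(x,2\pi\hbar k)e_k$ for symbols $a(x,\xi)$ periodic in $x$. $\mathcal{L}_1$: primitive rank-one sublattices $\Lambda=\mathbb{Z}\vec v_\Lambda$ of $\mathbb{Z}^2$, with a fixed generator $\vec v_\Lambda$; $\vec v_\Lambda^\perp$ is $\vec v_\Lambda$ rotated by $+\pi/2$; $L_\Lambda=\|\vec v_\Lambda\|$; $H_\Lambda(\xi)=\langle\xi,\vec v_\Lambda\rangle/L_\Lambda$; $\mathcal{I}_\Lambda(a)(x,\eta)=\frac1{L_\Lambda}\int_0^{L_\Lambda}a(x+t\vec v_\Lambda^\perp/L_\Lambda,\eta)dt$. For the lattice $\Lambda=\mathbb{Z}\vec v_{\Lambda_0}^\perp$ the generator is taken to be $\vec v_\Lambda=\vec v_{\Lambda_0}^\perp$. $dx$ is Lebesgue measure on $\mathbb{T}^2$. *)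

theory Defs
  imports "HOL-Analysis.Analysis"
begin

text \<open>Points of the torus are represented by points of R^2 (type real^2); functions on the
torus are functions on R^2 that are Z^2-periodic. Integration over the torus is integration
over the fundamental domain [0,1]^2 = cbox 0 1.\<close>

definition int_vec :: "real^2 \<Rightarrow> bool" where
  "int_vec z \<longleftrightarrow> (\<forall>i. z $ i \<in> \<int>)"

text \<open>Primitive vectors of Z^2: these are exactly the generators of rank-one primitive
sublattices of Z^2.\<close>
definition primitive_vec :: "real^2 \<Rightarrow> bool" where
  "primitive_vec v \<longleftrightarrow> (\<exists>p q :: int. v = (\<chi> i. if i = 1 then of_int p else of_int q) \<and> coprime p q)"

definition perp :: "real^2 \<Rightarrow> real^2" where
  "perp v = (\<chi> i. if i = 1 then - (v $ 2) else v $ 1)"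

definition ek :: "real^2 \<Rightarrow> real^2 \<Rightarrow> complex" where
  "ek k x = cis (2 * pi * (k \<bullet> x))"

text \<open>Standard quantization applied to the exponential e_k:
  Op_h(b) e_k = b(x, 2 pi h k) e_k.\<close>
definition Op_on_ek :: "real \<Rightarrow> (real^2 \<Rightarrow> real^2 \<Rightarrow> complex) \<Rightarrow> real^2 \<Rightarrow> (real^2 \<Rightarrow> complex)" where
  "Op_on_ek h b k = (\<lambda>x. b x ((2 * pi * h) *\<^sub>R k) * ek k x)"

definition torus_inner :: "(real^2 \<Rightarrow> complex) \<Rightarrow> (real^2 \<Rightarrow> complex) \<Rightarrow> complex" where
  "torus_inner u v = integral (cbox 0 1) (\<lambda>x. cnj (u x) * v x)"

definition H_lat :: "real^2 \<Rightarrow> real^2 \<Rightarrow> real" where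
  "H_lat v \<xi> = (\<xi> \<bullet> v) / norm v"

definition I_lat :: "real^2 \<Rightarrow> (real^2 \<Rightarrow> real \<Rightarrow> complex) \<Rightarrow> real^2 \<Rightarrow> real \<Rightarrow> complex" where
  "I_lat v a x \<eta> = (1 / complex_of_real (norm v)) *
      integral {0..norm v} (\<lambda>t. a (x + (t / norm v) *\<^sub>R perp v) \<eta>)"

text \<open>Iterated directional derivatives; a function is C^infinity iff all iterated
directional derivatives exist and are continuous.\<close>
fun dderiv :: "'a::real_normed_vector list \<Rightarrow> ('a \<Rightarrow> 'b::real_normed_vector) \<Rightarrow> 'a \<Rightarrow> 'b" where
  "dderiv [] f = f"
| "dderiv (d # ds) f = (\<lambda>x. vector_derivative (\<lambda>t. dderiv ds f (x + t *\<^sub>R d)) (at 0))"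

definition smooth_fun :: "('a::real_normed_vector \<Rightarrow> 'b::real_normed_vector) \<Rightarrow> bool" where
  "smooth_fun f \<longleftrightarrow> (\<forall>ds. continuous_on UNIV (dderiv ds f) \<and>
      (\<forall>d x. ((\<lambda>t. dderiv ds f (x + t *\<^sub>R d)) has_vector_derivative dderiv (d # ds) f x) (at 0)))"

text \<open>Test functions C_c^infinity(T^2 x R): smooth, Z^2-periodic in x, compactly supported in eta.\<close>
definition test_fun :: "(real^2 \<Rightarrow> real \<Rightarrow> complex) \<Rightarrow> bool" where
  "test_fun a \<longleftrightarrow> smooth_fun (\<lambda>(x, \<eta>). a x \<eta>) \<and>
      (\<forall>x z \<eta>. int_vec z \<longrightarrow> a (x + z) \<eta> = a x \<eta>) \<and>
      (\<exists>R. \<forall>x \<eta>. \<bar>\<eta>\<bar> > R \<longrightarrow> a x \<eta> = 0)"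

text \<open>The pairing  a |-> < psi_h , Op_h( I_Lambda(a)(x, h H_Lambda(xi)/eps) ) psi_h >
  with psi_h = e_k, for the lattice generated by v.\<close>
definition pairing :: "real^2 \<Rightarrow> real \<Rightarrow> real \<Rightarrow> real^2 \<Rightarrow> (real^2 \<Rightarrow> real \<Rightarrow> complex) \<Rightarrow> complex" where
  "pairing v h \<epsilon> k a =
     torus_inner (ek k) (Op_on_ek h (\<lambda>x \<xi>. I_lat v a x (h * H_lat v \<xi> / \<epsilon>)) k)"

end

theory Submission imports Defs begin

lemma shift_box:
  fixes g :: "real^2 \<Rightarrow> complex"
  assumes "(g has_integral I) (cbox a b)"
  shows "((\<lambda>x. g (x + c)) has_integral I) (cbox (a - c) (b - c))"
  using has_integral_affinity'[OF assms, of 1 c] by simp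

lemma split_cart:
  fixes f :: "real^2 \<Rightarrow> complex"
  assumes "f integrable_on cbox a b"
  shows "integral (cbox a b) f = integral (cbox a b \<inter> {x. x$i \<le> c}) f + integral (cbox a b \<inter> {x. x$i \<ge> c}) f"
proof -
  have "axis i 1 \<in> (Basis :: (real^2) set)" by (auto simp: Basis_vec_def)
  from integral_split[OF assms this, of c] show ?thesis by (simp add: inner_axis)
qed

lemma shift_coord:
  fixes g :: "real^2 \<Rightarrow> complex"
  assumes cont: "continuous_on UNIV g" and per: "\<And>x. g (x + axis i 1) = g x"
    and th: "0 \<le> \<theta>" "\<theta> \<le> 1"
  shows "integral (cbox 0 1) (\<lambda>x. g (x + \<theta> *\<^sub>R axis i 1)) = integral (cbox 0 1) g"
proof -
  let ?e = "axis i 1 :: real^2"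
  have gi: "g integrable_on cbox u v" for u v
    by (rule integrable_continuous[OF continuous_on_subset[OF cont]]) auto
  have c1: "continuous_on UNIV (\<lambda>x. g (x + \<theta> *\<^sub>R ?e))"
    by (intro continuous_on_compose2[OF cont]) (auto intro!: continuous_intros)
  have per2: "g (x + \<theta> *\<^sub>R ?e) = g (x + (\<theta> - 1) *\<^sub>R ?e)" for x
    using per[of "x + (\<theta> - 1) *\<^sub>R ?e"] by (simp add: algebra_simps)
  define B1 :: "real^2" where "B1 = (\<chi> j. if j = i then \<theta> else 1)"
  define A2 :: "real^2" where "A2 = (\<chi> j. if j = i then \<theta> else 0)"
  have r1: "cbox 0 1 \<inter> {x. x$i \<le> \<theta>} = cbox 0 B1"
    unfolding B1_def interval_split_cart(1)[of 0 1 i \<theta>, unfolded interval_cbox_cart] using th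
    by (intro arg_cong2[where f=cbox] refl) (simp add: vec_eq_iff)
  have r2: "cbox 0 1 \<inter> {x. x$i \<ge> \<theta>} = cbox A2 1"
    unfolding A2_def interval_split_cart(2)[of 0 1 \<theta> i, unfolded interval_cbox_cart] using th
    by (intro arg_cong2[where f=cbox] refl) (simp add: vec_eq_iff)
  have l1: "cbox 0 1 \<inter> {x. x$i \<le> 1 - \<theta>} = cbox (A2 - \<theta> *\<^sub>R ?e) (1 - \<theta> *\<^sub>R ?e)"
    unfolding A2_def interval_split_cart(1)[of 0 1 i "1-\<theta>", unfolded interval_cbox_cart] using th
    by (intro arg_cong2[where f=cbox]) (auto simp: vec_eq_iff axis_def)
  have l2: "cbox 0 1 \<inter> {x. x$i \<ge> 1 - \<theta>} = cbox (0 - (\<theta> - 1) *\<^sub>R ?e) (B1 - (\<theta> - 1) *\<^sub>R ?e)"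
    unfolding B1_def interval_split_cart(2)[of 0 1 "1-\<theta>" i, unfolded interval_cbox_cart] using th
    by (intro arg_cong2[where f=cbox]) (auto simp: vec_eq_iff axis_def)
  have "((\<lambda>x. g (x + \<theta> *\<^sub>R ?e)) has_integral integral (cbox A2 1) g) (cbox 0 1 \<inter> {x. x$i \<le> 1 - \<theta>})"
    unfolding l1 by (rule shift_box) (rule integrable_integral[OF gi])
  moreover have "((\<lambda>x. g (x + (\<theta> - 1) *\<^sub>R ?e)) has_integral integral (cbox 0 B1) g) (cbox 0 1 \<inter> {x. x$i \<ge> 1 - \<theta>})"
    unfolding l2 by (rule shift_box) (rule integrable_integral[OF gi])
  ultimately have "integral (cbox 0 1) (\<lambda>x. g (x + \<theta> *\<^sub>R ?e)) = integral (cbox 0 B1) g + integral (cbox A2 1) g"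
    using split_cart[of "\<lambda>x. g (x + \<theta> *\<^sub>R ?e)" 0 1 i "1 - \<theta>"] c1 per2
    by (simp add: integral_unique integrable_continuous continuous_on_subset add.commute)
  also have "\<dots> = integral (cbox 0 1) g"
    using split_cart[of g 0 1 i \<theta>] r1 r2 gi by simp
  finally show ?thesis .
qed


lemma int_vec_axis: "int_vec (axis i 1)"
  by (auto simp: int_vec_def axis_def)

lemma trans_inv:
  fixes g :: "real^2 \<Rightarrow> complex"
  assumes cont: "continuous_on UNIV g" and per: "\<And>x z. int_vec z \<Longrightarrow> g (x + z) = g x"
  shows "integral (cbox 0 1) (\<lambda>x. g (x + c)) = integral (cbox 0 1) g"
proof -
  define z :: "real^2" where "z = (\<chi> i. of_int \<lfloor>c$i\<rfloor>)"
  let ?e1 = "axis 1 1 :: real^2" and ?e2 = "axis 2 1 :: real^2"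
  have zi: "int_vec z" by (simp add: z_def int_vec_def)
  have c: "c = (frac (c$1) *\<^sub>R ?e1 + frac (c$2) *\<^sub>R ?e2) + z"
    by (simp add: vec_eq_iff forall_2 z_def axis_def frac_def)
  define g2 where "g2 = (\<lambda>x. g (x + frac (c$2) *\<^sub>R ?e2))"
  have g2c: "continuous_on UNIV g2" unfolding g2_def
    by (intro continuous_on_compose2[OF cont]) (auto intro!: continuous_intros)
  have eq: "g (x + c) = g2 (x + frac (c$1) *\<^sub>R ?e1)" for x
  proof -
    have "g (x + c) = g ((x + frac (c$1) *\<^sub>R ?e1 + frac (c$2) *\<^sub>R ?e2) + z)"
      by (subst c) (simp add: algebra_simps)
    then show ?thesis using per[OF zi] by (simp add: g2_def)
  qed
  have "integral (cbox 0 1) (\<lambda>x. g (x + c)) = integral (cbox 0 1) (\<lambda>x. g2 (x + frac (c$1) *\<^sub>R ?e1))"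
    by (simp add: eq)
  also have "\<dots> = integral (cbox 0 1) g2"
    by (rule shift_coord[OF g2c]) (auto simp: g2_def per[OF int_vec_axis, simplified add.assoc[symmetric]] frac_lt_1 less_imp_le
       intro: trans[OF _ per[OF int_vec_axis]] simp: algebra_simps)
  also have "\<dots> = integral (cbox 0 1) g"
    unfolding g2_def by (rule shift_coord[OF cont]) (auto simp: per[OF int_vec_axis] frac_lt_1 less_imp_le)
  finally show ?thesis .
qed

lemma avg_integral:
  fixes a :: "real^2 \<Rightarrow> real \<Rightarrow> complex" and w :: "real^2"
  assumes L: "L > 0" and cont: "continuous_on UNIV (\<lambda>(x, \<eta>). a x \<eta>)"
    and per: "\<And>x z \<eta>. int_vec z \<Longrightarrow> a (x + z) \<eta> = a x \<eta>"
  shows "integral (cbox 0 1) (\<lambda>x. (1 / complex_of_real L) * integral {0..L} (\<lambda>t. a (x + (t / L) *\<^sub>R w) \<eta>))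
       = integral (cbox 0 1) (\<lambda>x. a x \<eta>)"
proof -
  have gc: "continuous_on UNIV (\<lambda>x. a x \<eta>)" for \<eta>
  proof -
    have "continuous_on UNIV (\<lambda>x::real^2. (x, \<eta>))" by (intro continuous_intros)
    then show ?thesis using continuous_on_compose2[OF cont, of UNIV "\<lambda>x. (x, \<eta>)"] by simp
  qed
  have Fc: "continuous_on S (\<lambda>(x, t). a (x + (t / L) *\<^sub>R w) \<eta>)" for S
  proof -
    have "continuous_on S (\<lambda>(x::real^2,t::real). (x + (t / L) *\<^sub>R w, \<eta>))"
      using L by (auto simp: case_prod_unfold intro!: continuous_intros)
    then show ?thesis using continuous_on_compose2[OF cont, of S "\<lambda>(x,t). (x + (t / L) *\<^sub>R w, \<eta>)"]
      by (simp add: case_prod_unfold)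
  qed
  have e: "\<And>z::complex. (1 / complex_of_real L) * z = (1/L) *\<^sub>R z"
    by (simp add: scaleR_conv_of_real)
  have "integral (cbox 0 1) (\<lambda>x. (1 / complex_of_real L) * integral {0..L} (\<lambda>t. a (x + (t / L) *\<^sub>R w) \<eta>))
      = (1 / L) *\<^sub>R integral (cbox 0 1) (\<lambda>x. integral {0..L} (\<lambda>t. a (x + (t / L) *\<^sub>R w) \<eta>))"
    by (simp only: e integral_cmul)
  also have "integral (cbox 0 1) (\<lambda>x. integral {0..L} (\<lambda>t. a (x + (t / L) *\<^sub>R w) \<eta>))
     = integral {0..L} (\<lambda>t. integral (cbox 0 1) (\<lambda>x. a (x + (t / L) *\<^sub>R w) \<eta>))"
    using integral_swap_continuous[where a=0 and b=1 and c=0 and d=L, OF Fc] by (simp add: cbox_interval)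
  also have "\<dots> = integral {0..L} (\<lambda>t. integral (cbox 0 1) (\<lambda>x. a x \<eta>))"
    by (intro integral_cong trans_inv[OF gc] per)
  also have "\<dots> = L *\<^sub>R integral (cbox 0 1) (\<lambda>x. a x \<eta>)"
    using L by simp
  finally show ?thesis using L by simp
qed


lemma cis_cancel: "cnj (cis t) * (b * cis t) = b"
proof -
  have "cnj (cis t) * cis t = 1" by (simp add: cis_cnj cis_mult)
  then show ?thesis by (metis mult.left_commute mult.right_neutral)
qed

lemma pairing_eq:
  "pairing v h \<epsilon> k a = integral (cbox 0 1) (\<lambda>x. I_lat v a x (h * H_lat v ((2 * pi * h) *\<^sub>R k) / \<epsilon>))"
  unfolding pairing_def torus_inner_def Op_on_ek_def ek_def by (simp add: cis_cancel)

lemma vanish: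
  assumes a: "test_fun a" and lim: "filterlim (\<lambda>j. \<bar>\<eta> j\<bar>) at_top sequentially"
  shows "(\<lambda>j. integral (cbox 0 1) (\<lambda>x. I_lat v a x (\<eta> j))) \<longlonglongrightarrow> 0"
proof -
  from a obtain R where R: "\<And>x \<eta>. \<bar>\<eta>\<bar> > R \<Longrightarrow> a x \<eta> = 0" unfolding test_fun_def by blast
  have "eventually (\<lambda>j. \<bar>\<eta> j\<bar> > R) sequentially"
    using lim unfolding filterlim_at_top_dense by auto
  then have "eventually (\<lambda>j. integral (cbox 0 1) (\<lambda>x. I_lat v a x (\<eta> j)) = 0) sequentially"
    by eventually_elim (simp add: I_lat_def R)
  then show ?thesis by (rule tendsto_eventually)
qed

lemma inner2: "(x::real^2) \<bullet> y = x$1*y$1 + x$2*y$2" by (simp add: inner_vec_def sum_2)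
lemma perp_comp: "perp v $ 1 = - v$2" "perp v $ 2 = v$1" by (simp_all add: perp_def)
lemma perp_perp: "perp (perp v) = - v" by (simp add: vec_eq_iff forall_2 perp_comp)
lemma inner_perp: "v \<bullet> perp v = 0" "perp v \<bullet> v = 0" "perp u \<bullet> perp v = u \<bullet> v"
  by (simp_all add: inner2 perp_comp algebra_simps)
lemma norm_perp: "norm (perp v) = norm v" by (simp add: norm_eq_sqrt_inner inner_perp)

lemma prim_int: assumes "primitive_vec v"
  shows "\<exists>a b::int. v$1 = a \<and> v$2 = b \<and> coprime a b"
  using assms unfolding primitive_vec_def by auto

lemma prim_nonzero: assumes "primitive_vec v" shows "v \<noteq> 0"
proof
  assume "v = 0"
  with prim_int[OF assms] obtain a b :: int where "a = 0" "b = 0" "coprime a b" by auto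
  then show False by simp
qed

lemma int_perp:
  fixes p q a b :: int
  assumes c1: "coprime p q" and c2: "coprime a b" and e: "p*a + q*b = 0"
  shows "(a = -q \<and> b = p) \<or> (a = q \<and> b = -p)"
proof -
  have "q * b = - (p * a)" using e by simp
  then have "p dvd q * b" by simp
  then have pb: "p dvd b" using c1 coprime_dvd_mult_right_iff by blast
  have "p * a = - (q * b)" using e by simp
  then have "b dvd p * a" by simp
  then have bp: "b dvd p" using c2 by (metis coprime_commute coprime_dvd_mult_left_iff)
  have "q dvd p * a" using \<open>p * a = - (q * b)\<close> by simp
  then have qa: "q dvd a" using c1 by (metis coprime_commute coprime_dvd_mult_right_iff)
  have "a dvd q * b" using \<open>q * b = - (p * a)\<close> by simp
  then have aq: "a dvd q" using c2 coprime_dvd_mult_left_iff by blast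
  have 1: "\<bar>p\<bar> = \<bar>b\<bar>" using pb bp by (rule zdvd_antisym_abs)
  have 2: "\<bar>q\<bar> = \<bar>a\<bar>" using qa aq by (rule zdvd_antisym_abs)
  show ?thesis
  proof (cases "p = 0")
    case True
    then have "b = 0" using 1 by simp
    with c2 have "\<bar>a\<bar> = 1" by simp
    then show ?thesis using 2 True \<open>b = 0\<close> by auto
  next
    case False
    have "b = p \<or> b = -p" using 1 by auto
    moreover have "a = q \<or> a = -q" using 2 by auto
    ultimately show ?thesis
    proof (cases "q = 0")
      case True
      then show ?thesis using \<open>b = p \<or> b = -p\<close> \<open>a = q \<or> a = -q\<close> by auto
    next
      case qn: False
      have pq: "p * q \<noteq> 0" using False qn by simp
      have s1: "p * q + q * p \<noteq> 0" using pq by (simp add: mult.commute)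
      have s2: "p * - q + q * - p \<noteq> 0" using pq by (simp add: mult.commute)
      show ?thesis using \<open>b = p \<or> b = -p\<close> \<open>a = q \<or> a = -q\<close> e s1 s2 by auto
    qed
  qed
qed

lemma prim_perp:
  assumes u: "primitive_vec u" and v: "primitive_vec v" and o: "u \<bullet> v = 0"
  shows "v = perp u \<or> v = - perp u"
proof -
  obtain p q :: int where pq: "u$1 = p" "u$2 = q" "coprime p q" using prim_int[OF u] by blast
  obtain a b :: int where ab: "v$1 = a" "v$2 = b" "coprime a b" using prim_int[OF v] by blast
  have "real_of_int (p*a + q*b) = 0" using o pq ab by (simp add: inner2)
  then have "p*a + q*b = 0" by linarith
  from int_perp[OF pq(3) ab(3) this] show ?thesis
    by (auto simp: vec_eq_iff forall_2 perp_comp pq ab)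
qed

lemma X_bound:
  fixes X Y :: "nat \<Rightarrow> real"
  assumes e: "eventually (\<lambda>j. X j ^ 2 + Y j ^ 2 = D) sequentially" and D: "D > 0" and Y: "Y \<longlonglongrightarrow> 0"
  shows "eventually (\<lambda>j. \<bar>X j\<bar> > sqrt D / 2) sequentially"
proof -
  have "(\<lambda>j. Y j ^ 2) \<longlonglongrightarrow> 0" using tendsto_power[OF Y, of 2] by simp
  then have "eventually (\<lambda>j. Y j ^ 2 < 3 * D / 4) sequentially"
    using order_tendstoD(2)[OF \<open>(\<lambda>j. Y j ^ 2) \<longlonglongrightarrow> 0\<close>, of "3 * D / 4"] D by auto
  with e show ?thesis
  proof eventually_elim
    case (elim j)
    show ?case
    proof (rule ccontr)
      assume "\<not> ?case"
      then have "\<bar>X j\<bar> \<le> sqrt D / 2" by simp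
      then have "\<bar>X j\<bar>^2 \<le> (sqrt D / 2)^2" by (intro power_mono) auto
      also have "\<dots> = D / 4" using D by (simp add: power_divide)
      finally show False using elim by simp
    qed
  qed
qed

lemma diverge:
  fixes X Y T :: "nat \<Rightarrow> real"
  assumes X: "eventually (\<lambda>j. \<bar>X j\<bar> > c) sequentially" and c: "c > 0" and Y: "Y \<longlonglongrightarrow> 0"
    and T: "filterlim T at_top sequentially" and \<alpha>: "\<alpha> \<noteq> 0" and K: "K > 0"
  shows "filterlim (\<lambda>j. \<bar>K * T j * (X j * \<alpha> + Y j * \<beta>)\<bar>) at_top sequentially"
proof -
  have "(\<lambda>j. \<bar>Y j\<bar> * \<bar>\<beta>\<bar>) \<longlonglongrightarrow> 0" using tendsto_mult[OF tendsto_rabs[OF Y] tendsto_const, of "\<bar>\<beta>\<bar>"] by simp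
  then have Yb: "eventually (\<lambda>j. \<bar>Y j\<bar> * \<bar>\<beta>\<bar> < c * \<bar>\<alpha>\<bar> / 2) sequentially"
    using c \<alpha> by (intro order_tendstoD(2)) auto
  have Tp: "eventually (\<lambda>j. T j > 0) sequentially" using T unfolding filterlim_at_top_dense by auto
  have lim: "filterlim (\<lambda>j. (K * (c * \<bar>\<alpha>\<bar> / 2)) * T j) at_top sequentially"
    using c \<alpha> K by (intro filterlim_tendsto_pos_mult_at_top[OF tendsto_const _ T]) auto
  have "eventually (\<lambda>j. (K * (c * \<bar>\<alpha>\<bar> / 2)) * T j \<le> \<bar>K * T j * (X j * \<alpha> + Y j * \<beta>)\<bar>) sequentially"
    using X Yb Tp
  proof eventually_elim
    case (elim j)
    have "\<bar>X j * \<alpha>\<bar> \<ge> c * \<bar>\<alpha>\<bar>" using elim(1) \<alpha> by (simp add: abs_mult mult_right_mono)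
    then have "\<bar>X j * \<alpha> + Y j * \<beta>\<bar> \<ge> c * \<bar>\<alpha>\<bar> / 2" using elim(2)
    proof -
      have "\<bar>X j * \<alpha>\<bar> - \<bar>- (Y j * \<beta>)\<bar> \<le> \<bar>X j * \<alpha> - - (Y j * \<beta>)\<bar>" by (rule abs_triangle_ineq2)
      then show ?thesis using \<open>\<bar>X j * \<alpha>\<bar> \<ge> c * \<bar>\<alpha>\<bar>\<close> elim(2) by (simp add: abs_mult)
    qed
    have "(K * (c * \<bar>\<alpha>\<bar> / 2)) * T j = (K * T j) * (c * \<bar>\<alpha>\<bar> / 2)" by (simp add: algebra_simps)
    also have "\<dots> \<le> (K * T j) * \<bar>X j * \<alpha> + Y j * \<beta>\<bar>"
      using K elim(3) \<open>\<bar>X j * \<alpha> + Y j * \<beta>\<bar> \<ge> c * \<bar>\<alpha>\<bar> / 2\<close> by (intro mult_left_mono) auto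
    also have "\<dots> = \<bar>K * T j * (X j * \<alpha> + Y j * \<beta>)\<bar>" using K elim(3) by (simp add: abs_mult)
    finally show ?case .
  qed
  then show ?thesis by (rule filterlim_at_top_mono[OF lim])
qed


theorem proposition3p1:
  fixes v0 :: "real^2" and k :: "nat \<Rightarrow> real^2" and n m :: "nat \<Rightarrow> int"
    and h \<epsilon> :: "nat \<Rightarrow> real"
  assumes v0: "primitive_vec v0"
    and k_int: "\<And>j. int_vec (k j)"
    and k_dec: "\<And>j. k j = of_int (n j) *\<^sub>R v0 + of_int (m j) *\<^sub>R perp v0"
    and k_inf: "filterlim (\<lambda>j. norm (k j)) at_top sequentially"
    and h_def: "\<And>j. h j = 1 / norm (k j)"
    and eps_pos: "\<And>j. \<epsilon> j > 0"
    and eps_lower: "(\<lambda>j. (h j)\<^sup>2 / \<epsilon> j) \<longlonglongrightarrow> 0"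
    and eps_upper: "(\<lambda>j. \<epsilon> j / h j) \<longlonglongrightarrow> 0"
    and m_small: "(\<lambda>j. of_int (m j) * h j) \<longlonglongrightarrow> 0"
  shows
    "(\<forall>\<omega>::real. (\<lambda>j. 2 * pi * of_int (m j) * (h j)\<^sup>2 / \<epsilon> j) \<longlonglongrightarrow> \<omega> \<longrightarrow>
        (\<forall>a. test_fun a \<longrightarrow>
           (\<lambda>j. pairing (perp v0) (h j) (\<epsilon> j) (k j) a)
             \<longlonglongrightarrow> integral (cbox 0 1) (\<lambda>x. a x (\<omega> * norm v0))) \<and>
        (\<forall>v. primitive_vec v \<and> v \<noteq> perp v0 \<and> v \<noteq> - perp v0 \<longrightarrow>
           (\<forall>a. test_fun a \<longrightarrow> (\<lambda>j. pairing v (h j) (\<epsilon> j) (k j) a) \<longlonglongrightarrow> 0)))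
     \<and>
     (filterlim (\<lambda>j. 2 * pi * \<bar>of_int (m j)\<bar> * (h j)\<^sup>2 / \<epsilon> j) at_top sequentially \<longrightarrow>
        (\<forall>v. primitive_vec v \<longrightarrow>
           (\<forall>a. test_fun a \<longrightarrow> (\<lambda>j. pairing v (h j) (\<epsilon> j) (k j) a) \<longlonglongrightarrow> 0)))"
proof -
  define L where "L = norm v0"
  have v0nz: "v0 \<noteq> 0" using prim_nonzero[OF v0] .
  have L: "L > 0" using v0nz by (simp add: L_def)
  have vv: "v0 \<bullet> v0 = L^2" by (simp add: L_def power2_norm_eq_inner)
  define X where "X j = of_int (n j) * h j" for j
  define Y where "Y j = of_int (m j) * h j" for j
  define T where "T j = h j / \<epsilon> j" for j
  have kk: "norm (k j)^2 = (of_int (n j)^2 + of_int (m j)^2) * L^2" for j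
    unfolding power2_norm_eq_inner k_dec
    by (simp add: inner_add_left inner_add_right inner_perp vv power2_eq_square algebra_simps)
  have kpos: "eventually (\<lambda>j. norm (k j) > 0) sequentially"
    using filterlim_at_top_dense[THEN iffD1, OF k_inf, rule_format, of 0] .
  have XY: "eventually (\<lambda>j. X j^2 + Y j^2 = 1 / L^2) sequentially"
    using kpos
  proof eventually_elim
    case (elim j)
    have "(of_int (n j)^2 + of_int (m j)^2) * L^2 > 0" using kk[of j] elim by (metis zero_less_power)
    then have nz: "(of_int (n j)^2 + of_int (m j)^2 :: real) \<noteq> 0" by auto
    have "X j^2 + Y j^2 = (of_int (n j)^2 + of_int (m j)^2) / norm (k j)^2"
      by (simp add: X_def Y_def h_def power_mult_distrib power_divide add_divide_distrib)
    also have "\<dots> = 1 / L^2" using nz L by (simp add: kk)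
    finally show ?case .
  qed
  have Ylim: "Y \<longlonglongrightarrow> 0" using m_small by (simp add: Y_def[abs_def])
  have Xb: "eventually (\<lambda>j. \<bar>X j\<bar> > sqrt (1 / L^2) / 2) sequentially"
    by (rule X_bound[OF XY _ Ylim]) (use L in simp)
  have cpos: "sqrt (1 / L^2) / 2 > 0" using L by simp
  have hpos: "eventually (\<lambda>j. h j > 0) sequentially"
    using kpos by eventually_elim (simp add: h_def)
  have Tlim: "filterlim T at_top sequentially"
  proof -
    have "eventually (\<lambda>j. 0 < \<epsilon> j / h j) sequentially"
      using hpos by eventually_elim (simp add: eps_pos)
    from filterlim_inverse_at_top[OF eps_upper this]
    show ?thesis by (simp add: T_def[abs_def])
  qed
  have kv: "k j \<bullet> v = of_int (n j) * (v0 \<bullet> v) + of_int (m j) * (perp v0 \<bullet> v)" for j v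
    by (simp add: k_dec inner_add_left)
  have eta: "h j * H_lat v ((2*pi*h j) *\<^sub>R k j) / \<epsilon> j
      = (2*pi / norm v) * T j * (X j * (v0 \<bullet> v) + Y j * (perp v0 \<bullet> v))" if "v \<noteq> 0" for j v
    using that eps_pos[of j]
    by (simp add: H_lat_def T_def X_def Y_def kv field_simps)
  have van: "(\<lambda>j. pairing v (h j) (\<epsilon> j) (k j) a) \<longlonglongrightarrow> 0"
    if a: "test_fun a" and v: "primitive_vec v"
      and lim: "filterlim (\<lambda>j. \<bar>(2*pi / norm v) * T j * (X j * (v0 \<bullet> v) + Y j * (perp v0 \<bullet> v))\<bar>) at_top sequentially"
    for v a
  proof -
    have "filterlim (\<lambda>j. \<bar>h j * H_lat v ((2*pi*h j) *\<^sub>R k j) / \<epsilon> j\<bar>) at_top sequentially"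
      using lim eta[OF prim_nonzero[OF v]] by simp
    from vanish[OF a this] show ?thesis by (simp add: pairing_eq)
  qed
  have van1: "(\<lambda>j. pairing v (h j) (\<epsilon> j) (k j) a) \<longlonglongrightarrow> 0"
    if a: "test_fun a" and v: "primitive_vec v" and al: "v0 \<bullet> v \<noteq> 0" for v a
  proof (rule van[OF a v])
    have "norm v > 0" using prim_nonzero[OF v] by simp
    then show "filterlim (\<lambda>j. \<bar>(2*pi / norm v) * T j * (X j * (v0 \<bullet> v) + Y j * (perp v0 \<bullet> v))\<bar>) at_top sequentially"
      by (intro diverge[OF Xb cpos Ylim Tlim al]) simp
  qed
  have part1: "(\<lambda>j. pairing (perp v0) (h j) (\<epsilon> j) (k j) a) \<longlonglongrightarrow> integral (cbox 0 1) (\<lambda>x. a x (\<omega> * norm v0))"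
    if om: "(\<lambda>j. 2 * pi * of_int (m j) * (h j)\<^sup>2 / \<epsilon> j) \<longlonglongrightarrow> \<omega>" and a: "test_fun a" for \<omega> a
  proof -
    have cont: "continuous_on UNIV (\<lambda>(x, \<eta>). a x \<eta>)"
      using a unfolding test_fun_def smooth_fun_def
      by (metis dderiv.simps(1))
    have per: "\<And>x z \<eta>. int_vec z \<Longrightarrow> a (x + z) \<eta> = a x \<eta>"
      using a unfolding test_fun_def by blast
    define \<eta> where "\<eta> j = h j * H_lat (perp v0) ((2*pi*h j) *\<^sub>R k j) / \<epsilon> j" for j
    have pe: "pairing (perp v0) (h j) (\<epsilon> j) (k j) a = integral (cbox 0 1) (\<lambda>x. a x (\<eta> j))" for j
      unfolding pairing_eq I_lat_def \<eta>_def
      by (rule avg_integral[OF _ cont per]) (use L in \<open>simp add: norm_perp L_def\<close>)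
    have etaeq: "\<eta> j = (2 * pi * of_int (m j) * (h j)\<^sup>2 / \<epsilon> j) * L" for j
      using eps_pos[of j] L
      by (simp add: \<eta>_def H_lat_def kv inner_perp vv norm_perp L_def[symmetric] field_simps power2_eq_square)
    have etalim: "\<eta> \<longlonglongrightarrow> \<omega> * norm v0"
      unfolding etaeq L_def by (intro tendsto_mult_right om)
    have Gc: "continuous_on UNIV (\<lambda>\<eta>. integral (cbox 0 1) (\<lambda>x. a x \<eta>))"
    proof (rule integral_continuous_on_param)
      have "continuous_on (UNIV \<times> cbox 0 1) (\<lambda>(\<eta>::real, x::real^2). (x, \<eta>))"
        by (auto simp: case_prod_unfold intro!: continuous_intros)
      then show "continuous_on (UNIV \<times> cbox 0 1) (\<lambda>(\<eta>::real, x::real^2). a x \<eta>)"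
        using continuous_on_compose2[OF cont, of "UNIV \<times> cbox 0 1" "\<lambda>(\<eta>, x). (x, \<eta>)"]
        by (simp add: case_prod_unfold)
    qed
    have "isCont (\<lambda>\<eta>. integral (cbox 0 1) (\<lambda>x. a x \<eta>)) (\<omega> * norm v0)"
      using Gc by (simp add: continuous_on_eq_continuous_at)
    from isCont_tendsto_compose[OF this etalim] show ?thesis by (simp add: pe)
  qed
  have orth: "(v0 \<bullet> v)^2 + (perp v0 \<bullet> v)^2 = (v0 \<bullet> v0) * (v \<bullet> v)" for v
    by (simp add: inner2 perp_comp power2_eq_square algebra_simps)
  show ?thesis
  proof (intro conjI allI impI)
    fix \<omega> a assume "(\<lambda>j. 2 * pi * of_int (m j) * (h j)\<^sup>2 / \<epsilon> j) \<longlonglongrightarrow> \<omega>" "test_fun a"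
    then show "(\<lambda>j. pairing (perp v0) (h j) (\<epsilon> j) (k j) a) \<longlonglongrightarrow> integral (cbox 0 1) (\<lambda>x. a x (\<omega> * norm v0))"
      by (rule part1)
  next
    fix v a assume v: "primitive_vec v \<and> v \<noteq> perp v0 \<and> v \<noteq> - perp v0" and a: "test_fun a"
    have "v0 \<bullet> v \<noteq> 0" using prim_perp[OF v0, of v] v by blast
    then show "(\<lambda>j. pairing v (h j) (\<epsilon> j) (k j) a) \<longlonglongrightarrow> 0" using van1 a v by blast
  next
    fix v a assume div: "filterlim (\<lambda>j. 2 * pi * \<bar>of_int (m j)\<bar> * (h j)\<^sup>2 / \<epsilon> j) at_top sequentially"
      and v: "primitive_vec v" and a: "test_fun a"
    show "(\<lambda>j. pairing v (h j) (\<epsilon> j) (k j) a) \<longlonglongrightarrow> 0"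
    proof (cases "v0 \<bullet> v = 0")
      case False
      then show ?thesis using van1 a v by blast
    next
      case True
      have vnz: "v \<noteq> 0" using prim_nonzero[OF v] .
      have "(v0 \<bullet> v0) * (v \<bullet> v) > 0" using v0nz vnz by simp
      then have \<beta>: "perp v0 \<bullet> v \<noteq> 0" using orth[of v] True by auto
      have Kp: "\<bar>perp v0 \<bullet> v\<bar> / norm v > 0" using \<beta> vnz by simp
      have eq: "\<bar>(2*pi / norm v) * T j * (X j * (v0 \<bullet> v) + Y j * (perp v0 \<bullet> v))\<bar>
          = \<bar>perp v0 \<bullet> v\<bar> / norm v * (2 * pi * \<bar>of_int (m j)\<bar> * (h j)\<^sup>2 / \<epsilon> j)" for j
        using True eps_pos[of j]
        by (simp add: T_def Y_def abs_mult abs_divide power2_eq_square field_simps)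
      show ?thesis
        by (rule van[OF a v]) (unfold eq, rule filterlim_tendsto_pos_mult_at_top[OF tendsto_const Kp div])
    qed
  qed
qed

end
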